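(* $$\sum_{n=1}^\infty \frac{H_n \binom{2n}{n}}{(2n+1)\, 2^{2n}} = 4G - \pi\log 2,$$ where $G$ is Catalan's constant.
   Context: $H_n=\sum_{k=1}^n \frac{1}{k}$ denotes the $n$-th harmonic number and $\binom{2n}{n}$ the central binomial coefficient; $G=\sum_{n=0}^\infty \frac{(-1)^n}{(2n+1)^2}$ is Catalan's constant; $\log$ is the natural logarithm. *)

theory Defs
  imports "HOL-Analysis.Analysis"
begin

definition catalan_const :: real where
  "catalan_const = (\<Sum>n. (-1) ^ n / (2 * real n + 1) ^ 2)"

end

theory Submission
  imports Defs
begin

definition cc :: "nat \<Rightarrow> real" where "cc n = real ((2*n) choose n) / 4^n"

lemma central_rec: "Suc n * ((2*Suc n) choose Suc n) = 2*(2*n+1)*((2*n) choose n)"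
proof -
  define A where "A = (Suc (Suc (2*n)) choose Suc n)"
  define B where "B = (Suc (2*n) choose n)"
  define C where "C = ((2*n) choose n)"
  have e1: "Suc n * A = Suc (Suc (2*n)) * B"
    unfolding A_def B_def by (rule Suc_times_binomial)
  have sym: "B = (Suc (2*n) choose Suc n)"
    using binomial_symmetric[of n "Suc (2*n)"] unfolding B_def by simp
  have e2: "Suc n * B = Suc (2*n) * C"
    unfolding sym C_def by (rule Suc_times_binomial)
  have "Suc n * (Suc n * A) = Suc n * (2*(2*n+1)*C)"
  proof -
    have "Suc n * (Suc n * A) = Suc (Suc (2*n)) * (Suc n * B)" using e1 by (simp only: ac_simps)
    also have "\<dots> = Suc (Suc (2*n)) * (Suc (2*n) * C)" using e2 by simp
    also have "\<dots> = Suc n * (2*(2*n+1)*C)" by simp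
    finally show ?thesis .
  qed
  then have "Suc n * A = 2*(2*n+1)*C" by (simp only: mult_cancel1) simp
  moreover have "2 * Suc n = Suc (Suc (2*n))" by simp
  ultimately show ?thesis unfolding A_def C_def by simp
qed

lemma cc_Suc: "cc (Suc n) = cc n * (2*n+1)/(2*n+2)"
proof -
  define A where "A = ((2*Suc n) choose Suc n)"
  define C where "C = ((2*n) choose n)"
  have "real (Suc n * A) = real (2*(2*n+1)*C)"
    unfolding A_def C_def using central_rec[of n] by metis
  then have h: "(real n + 1) * real A = 2*(2*real n+1)* real C"
    by (simp add: algebra_simps)
  have "cc (Suc n) = real A / 4^(Suc n)" unfolding cc_def A_def by simp
  also have "\<dots> = (2*(2*real n+1)* real C / (real n + 1)) / 4^(Suc n)"
  proof -
    have "real A = 2*(2*real n+1)* real C / (real n + 1)"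
      using h by (simp add: field_simps)
    then show ?thesis by simp
  qed
  also have "\<dots> = cc n * (2*n+1)/(2*n+2)"
  proof -
    have aux: "(2*(2*m+1)*X/(m+1))/(4*q) = X/q*(2*m+1)/(2*m+2)"
      if "(q::real) > 0" "m \<ge> 0" for q m X :: real
    proof -
      show ?thesis using that by (simp add: divide_simps) (simp add: algebra_simps)
    qed
    show ?thesis unfolding cc_def C_def using aux[of "4^n" "real n" "real ((2*n) choose n)"]
      by (simp add: power_Suc algebra_simps)
  qed
  finally show ?thesis .
qed

lemma cc_0 [simp]: "cc 0 = 1" by (simp add: cc_def)

lemma cc_nonneg: "cc n \<ge> 0" by (simp add: cc_def)

lemma cc_le1: "cc n \<le> 1"
proof (induction n)
  case (Suc n)
  have "cc (Suc n) = cc n * ((2*n+1)/(2*n+2))" by (simp add: cc_Suc)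
  also have "\<dots> \<le> 1 * 1" by (intro mult_mono Suc cc_nonneg) auto
  finally show ?case by simp
qed simp

lemma aux_rat: "(s::real) * g * (2*m+1)/(2*m+2) = (-s) * ((-1/2 - m) * g / (m+1))" if "m \<ge> 0" for m
proof -
  have "m + 1 \<noteq> 0" "2*m+2 \<noteq> 0" using that by auto
  then show ?thesis by (simp add: field_simps)
qed

lemma cc_gchoose: "cc n = (-1)^n * ((-1/2::real) gchoose n)"
proof (induction n)
  case 0
  show ?case by simp
next
  case (Suc n)
  define g where "g = ((-1/2::real) gchoose n)"
  define g' where "g' = ((-1/2::real) gchoose Suc n)"
  have r: "real (Suc n) * g' = (-1/2 - real n) * g"
    unfolding g_def g'_def
    using trans[OF gbinomial_absorption[of n "-1/2::real"] gbinomial_absorb_comp[of "-1/2::real" n, symmetric]] .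
  have ne: "real (Suc n) \<noteq> 0" by simp
  have g': "g' = (-1/2 - real n) * g / (real n + 1)"
  proof -
    have "g' = real (Suc n) * g' / real (Suc n)" using ne by simp
    also have "\<dots> = (-1/2 - real n) * g / real (Suc n)" by (simp only: r)
    finally show ?thesis by simp
  qed
  have "cc (Suc n) = ((-1)^n * g) * (2*real n+1)/(2*real n+2)"
    unfolding cc_Suc Suc.IH g_def by (simp add: add.commute)
  also have "\<dots> = (- ((-1)^n)) * ((-1/2 - real n) * g / (real n + 1))"
    by (rule aux_rat) simp
  also have "\<dots> = (-1)^Suc n * g'" unfolding g' by simp
  finally show ?case unfolding g'_def .
qed

lemma cc_series:
  assumes "\<bar>x\<bar> < (1::real)"
  shows "(\<lambda>n. cc n * x^(2*n)) sums (1 / sqrt (1 - x^2))"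
proof -
  have x2: "abs (-(x^2)) < 1" using assms by (simp add: abs_square_less_1)
  have s: "(\<lambda>n. ((-1/2::real) gchoose n) * (- (x^2))^n) sums (1 + - (x^2)) powr (-1/2)"
    by (rule gen_binomial_real[OF x2])
  have eq: "((-1/2::real) gchoose n) * (- (x^2))^n = cc n * x^(2*n)" for n
  proof -
    have a: "(- (x^2))^n = (-1)^n * (x^2)^n" by (rule power_minus)
    have b: "(x^2)^n = x^(2*n)" by (rule power_mult[symmetric])
    have "((-1/2::real) gchoose n) * (- (x^2))^n = ((-1)^n * ((-1/2::real) gchoose n)) * x^(2*n)"
      unfolding a b by (simp only: mult_ac)
    then show ?thesis by (simp only: cc_gchoose[symmetric])
  qed
  have e: "(\<lambda>n. ((-1/2::real) gchoose n) * (- (x^2))^n) = (\<lambda>n. cc n * x^(2*n))"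
    by (rule ext) (rule eq)
  have p: "(1 + - (x^2)) powr (-1/2) = 1 / sqrt (1 - x^2)"
  proof -
    have p: "0 \<le> 1 - x^2" using x2 by simp
    have "(1 + - (x^2)) powr (-1/2) = (1 - x^2) powr (- (1/2))" by simp
    also have "\<dots> = inverse ((1 - x^2) powr (1/2))" by (rule powr_minus)
    also have "\<dots> = inverse (sqrt (1 - x^2))" using powr_half_sqrt[OF p] by (rule arg_cong)
    finally show ?thesis by (simp only: inverse_eq_divide)
  qed
  show ?thesis using s unfolding e p .
qed

lemma odd_series_deriv:
  fixes a :: "nat \<Rightarrow> real"
  assumes a: "\<And>n. \<bar>a n\<bar> \<le> 1" and x: "\<bar>x\<bar> < 1"
  shows "summable (\<lambda>n. a n * x^(2*n+1)/(2*n+1))"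
    "((\<lambda>x. \<Sum>n. a n * x^(2*n+1)/(2*n+1)) has_real_derivative (\<Sum>n. a n * x^(2*n))) (at x)"
proof -
  define r where "r = (\<bar>x\<bar> + 1)/2"
  have r: "\<bar>x\<bar> < r" "r < 1" "0 < r" using x unfolding r_def by auto
  have der: "((\<lambda>y. a n * y^(2*n+1)/(2*n+1)) has_field_derivative a n * y^(2*n)) (at y within {-r..r})"
    for n y
  proof -
    have d: "((\<lambda>y. y^(2*n+1)) has_field_derivative real (2*n+1) * y^(2*n)) (at y within {-r..r})"
      using DERIV_pow[of "2*n+1" y "{-r..r}"] by simp
    have "((\<lambda>y. a n / (2*n+1) * y^(2*n+1)) has_field_derivative a n/(2*n+1) * (real (2*n+1) * y^(2*n))) (at y within {-r..r})"
      by (rule DERIV_cmult[OF d])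
    moreover have "(\<lambda>y. a n / (2*n+1) * y^(2*n+1)) = (\<lambda>y. a n * y^(2*n+1)/(2*n+1))"
      by (simp add: fun_eq_iff)
    moreover have "a n/(2*n+1) * (real (2*n+1) * y^(2*n)) = a n * y^(2*n)"
      by (simp add: divide_simps)
    ultimately show ?thesis by simp
  qed
  have unif: "uniformly_convergent_on {-r..r} (\<lambda>N y. \<Sum>i<N. a i * y^(2*i))"
  proof (rule Weierstrass_m_test'[where M = "\<lambda>n. (r^2)^n"])
    fix n y assume y: "y \<in> {-r..r}"
    have "norm (a n * y^(2*n)) = \<bar>a n\<bar> * \<bar>y\<bar>^(2*n)" by (simp add: abs_mult power_abs)
    also have "\<dots> \<le> 1 * r^(2*n)"
      using y a[of n] by (intro mult_mono power_mono) auto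
    finally show "norm (a n * y^(2*n)) \<le> (r^2)^n" by (simp add: power_mult)
  next
    show "summable (\<lambda>n. (r^2)^n)" using r by (intro summable_geometric) (simp add: abs_square_less_1)
  qed
  have s0: "summable (\<lambda>n. a n * (0::real)^(2*n+1)/(2*n+1))" by simp
  have xi: "x \<in> interior {-r..r}" using r by auto
  show "summable (\<lambda>n. a n * x^(2*n+1)/(2*n+1))"
    by (rule has_field_derivative_series'(1)[OF convex_real_interval(5) der unif _ s0 xi]) (use r in auto)
  show "((\<lambda>x. \<Sum>n. a n * x^(2*n+1)/(2*n+1)) has_real_derivative (\<Sum>n. a n * x^(2*n))) (at x)"
    by (rule has_field_derivative_series'(2)[OF convex_real_interval(5) der unif _ s0 xi]) (use r in auto)
qed

definition ti2 :: "real \<Rightarrow> real" where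
  "ti2 x = (\<Sum>n. ((-1)^n / (2*n+1)) * x^(2*n+1)/(2*n+1))"

definition ti2d :: "real \<Rightarrow> real" where
  "ti2d x = (\<Sum>n. ((-1)^n / (2*n+1)) * x^(2*n))"

lemma ti2_deriv: "\<bar>x\<bar> < 1 \<Longrightarrow> (ti2 has_real_derivative ti2d x) (at x)"
proof -
  assume x: "\<bar>x\<bar> < 1"
  have "\<bar>(-1)^n / (2*real n+1)\<bar> \<le> 1" for n by (simp add: divide_simps)
  from odd_series_deriv(2)[of "\<lambda>n. (-1)^n / (2*n+1)", OF _ x] this
  show ?thesis unfolding ti2_def ti2d_def by (simp add: fun_eq_iff)
qed

lemma ti2d_arctan: "\<bar>x\<bar> < 1 \<Longrightarrow> x * ti2d x = arctan x"
proof -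
  assume x: "\<bar>x\<bar> < 1"
  have "\<bar>(-1)^n / (2*real n+1)\<bar> \<le> 1" for n by (simp add: divide_simps)
  have sm: "summable (\<lambda>n. ((-1)^n / (2*n+1)) * x^(2*n))"
  proof (rule summable_comparison_test'[where g = "\<lambda>n. (x^2)^n" and N = 0])
    show "summable (\<lambda>n. (x^2)^n)" using x by (intro summable_geometric) (simp add: abs_square_less_1)
    fix n :: nat
    have "norm (((-1)^n / (2*n+1)) * x^(2*n)) = (1/(2*n+1)) * \<bar>x\<bar>^(2*n)"
      by (simp add: abs_mult power_abs)
    also have "\<dots> \<le> 1 * \<bar>x\<bar>^(2*n)" by (intro mult_right_mono) auto
    finally show "norm (((-1)^n / (2*n+1)) * x^(2*n)) \<le> (x^2)^n"
      by (simp add: power_mult power_abs)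
  qed
  have "x * ti2d x = (\<Sum>n. x * (((-1)^n / (2*n+1)) * x^(2*n)))"
    unfolding ti2d_def using sm by (rule suminf_mult[symmetric])
  also have "\<dots> = (\<Sum>k. (-1)^k * (1 / real (k * 2 + 1) * x ^ (k * 2 + 1)))"
    by (intro suminf_cong) (simp add: field_simps power_Suc mult.commute)
  also have "\<dots> = arctan x" using x by (simp add: arctan_series)
  finally show ?thesis .
qed

lemma ti2_cont: "continuous_on {-1..1} ti2"
proof -
  have sM: "summable (\<lambda>n. inverse (real (Suc n) ^ 2))"
  proof -
    have "summable (\<lambda>n. inverse (real n ^ 2))" by (rule inverse_power_summable) simp
    then show ?thesis by (subst summable_Suc_iff)
  qed
  have ul: "uniform_limit {-1..1} (\<lambda>N y. \<Sum>i<N. ((-1)^i / (2*i+1)) * y^(2*i+1)/(2*i+1))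
            (\<lambda>y. \<Sum>i. ((-1)^i / (2*i+1)) * y^(2*i+1)/(2*i+1)) sequentially"
  proof (rule Weierstrass_m_test[OF _ sM])
    fix n and y :: real assume y: "y \<in> {-1..1}"
    have "norm (((-1)^n / (2*n+1)) * y^(2*n+1)/(2*n+1)) = \<bar>y\<bar>^(2*n+1) / (2*n+1)^2"
      by (simp add: abs_mult power_abs power2_eq_square)
    also have "\<dots> \<le> 1 / (2*real n+1)^2"
      using y by (intro divide_right_mono power_le_one) auto
    also have "\<dots> \<le> inverse (real (Suc n) ^ 2)"
      by (simp add: divide_simps power_mono)
    finally show "norm (((-1)^n / real (2*n+1)) * y^(2*n+1)/ real (2*n+1)) \<le> inverse (real (Suc n) ^ 2)"
      by (simp add: add.commute)
  qed
  show ?thesis unfolding ti2_def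
    by (rule uniform_limit_theorem[OF _ ul]) (auto intro!: always_eventually continuous_intros)
qed

lemma ti2_0: "ti2 0 = 0" unfolding ti2_def by simp

lemma ti2_1: "ti2 1 = catalan_const"
  unfolding ti2_def catalan_const_def by (intro suminf_cong) (simp add: power2_eq_square add.commute)

definition bs :: "real \<Rightarrow> real" where
  "bs x = (\<Sum>n. cc n * x^(2*n+1)/(2*n+1))"

lemma cc_abs_le: "\<bar>cc n\<bar> \<le> 1" using cc_nonneg[of n] cc_le1[of n] by simp

lemma bs_summable: "\<bar>x\<bar> < 1 \<Longrightarrow> summable (\<lambda>n. cc n * x^(2*n+1)/(2*n+1))"
  using odd_series_deriv(1)[of cc, OF cc_abs_le] by blast

lemma bs_arcsin: assumes x: "\<bar>x\<bar> < 1" shows "bs x = arcsin x"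
proof -
  have d: "((\<lambda>y. bs y - arcsin y) has_field_derivative 0) (at y within {-1<..<1})"
    if y: "y \<in> {-1<..<1}" for y
  proof -
    have ya: "\<bar>y\<bar> < 1" using y by auto
    have d1: "(bs has_real_derivative (\<Sum>n. cc n * y^(2*n))) (at y)"
      using odd_series_deriv(2)[of cc, OF cc_abs_le ya] unfolding bs_def by (simp add: fun_eq_iff)
    have e: "(\<Sum>n. cc n * y^(2*n)) = 1 / sqrt (1 - y^2)"
      using cc_series[OF ya] by (rule sums_unique[symmetric])
    have d2: "(arcsin has_real_derivative inverse (sqrt (1 - y^2))) (at y)"
      using y by (intro DERIV_arcsin) auto
    have dd: "((\<lambda>y. bs y - arcsin y) has_real_derivative (1 / sqrt (1 - y^2) - inverse (sqrt (1 - y^2)))) (at y)"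
      using DERIV_diff[OF d1 d2] e by simp
    have z: "1 / sqrt (1 - y^2) - inverse (sqrt (1 - y^2)) = 0" by (simp add: inverse_eq_divide)
    show ?thesis using dd unfolding z by (rule has_field_derivative_at_within)
  qed
  obtain c where c: "\<forall>y\<in>{-1<..<1}. bs y - arcsin y = c"
    using has_field_derivative_zero_constant[OF convex_real_interval(8) d] by blast
  have "bs 0 = 0" unfolding bs_def by simp
  then have "c = 0" using c[rule_format, of 0] by simp
  moreover have "x \<in> {-1<..<1}" using x by auto
  ultimately show ?thesis using c by auto
qed

lemma A1_sums: "(\<lambda>n. cc n / (2*n+1)) sums (pi/2)"
proof -
  have ev0: "eventually (\<lambda>x. x \<in> {0<..<1}) (at_left (1::real))"
    by (rule eventually_at_left_real) simp
  have ev1: "eventually (\<lambda>x. x \<in> {-1<..<1}) (at_left (1::real))"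
    by (rule eventually_at_left_real) simp
  have nn: "0 \<le> cc n / (2*n+1)" for n using cc_nonneg[of n] by simp
  have le: "(\<Sum>n<N. cc n / (2*n+1)) \<le> pi/2" for N
  proof -
    define p where "p x = (\<Sum>n<N. cc n * x^(2*n+1)/(2*n+1))" for x :: real
    have pc: "(p \<longlongrightarrow> p 1) (at_left 1)"
      unfolding p_def by (intro tendsto_intros) auto
    have ev: "eventually (\<lambda>x. p x \<le> pi/2) (at_left 1)"
      using ev0
    proof (rule eventually_mono)
      fix x :: real assume x: "x \<in> {0<..<1}"
      then have xa: "\<bar>x\<bar> < 1" by auto
      have "p x \<le> bs x" unfolding p_def bs_def
        by (rule sum_le_suminf[OF bs_summable[OF xa]]) (use x cc_nonneg in auto)
      also have "\<dots> = arcsin x" by (rule bs_arcsin[OF xa])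
      also have "\<dots> \<le> pi/2" using x arcsin_bounded[of x] by auto
      finally show "p x \<le> pi/2" .
    qed
    have "p 1 \<le> pi/2"
      by (rule tendsto_upperbound[OF pc ev]) simp
    then show ?thesis unfolding p_def by simp
  qed
  have sm: "summable (\<lambda>n. cc n / (2*n+1))"
    by (rule summableI_nonneg_bounded[OF nn le])
  have up: "(\<Sum>n. cc n / (2*n+1)) \<le> pi/2"
    by (rule suminf_le_const[OF sm le])
  have lo: "pi/2 \<le> (\<Sum>n. cc n / (2*n+1))"
  proof -
    have lim: "((\<lambda>x. arcsin x) \<longlongrightarrow> arcsin 1) (at_left 1)"
      by (rule continuous_on_tendsto_compose[OF continuous_on_arcsin' tendsto_ident_at])
         (auto intro: eventually_mono[OF ev1])
    have ev: "eventually (\<lambda>x. arcsin x \<le> (\<Sum>n. cc n / (2*n+1))) (at_left 1)"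
      using ev0
    proof (rule eventually_mono)
      fix x :: real assume x: "x \<in> {0<..<1}"
      then have xa: "\<bar>x\<bar> < 1" by auto
      have "arcsin x = bs x" by (rule bs_arcsin[OF xa, symmetric])
      also have "\<dots> \<le> (\<Sum>n. cc n / (2*n+1))" unfolding bs_def
      proof (rule suminf_le[OF _ bs_summable[OF xa] sm])
        fix n
        have "cc n * x^(2*n+1) \<le> cc n * 1"
          using x cc_nonneg[of n] by (intro mult_left_mono power_le_one) auto
        then show "cc n * x^(2*n+1)/(2*n+1) \<le> cc n / (2*n+1)"
          by (intro divide_right_mono) auto
      qed
      finally show "arcsin x \<le> (\<Sum>n. cc n / (2*n+1))" .
    qed
    have "arcsin 1 \<le> (\<Sum>n. cc n / (2*n+1))"
      by (rule tendsto_upperbound[OF lim ev]) simp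
    then show ?thesis by simp
  qed
  from sm up lo show ?thesis
    by (metis antisym summable_sums)
qed

definition tt :: "real \<Rightarrow> real" where "tt s = sqrt (1 - s^2) / (1 + s)"
definition Phi :: "real \<Rightarrow> real" where "Phi s = -4 * ti2 (tt s) - pi * ln ((1 + s)/2)"
definition hh :: "real \<Rightarrow> real" where "hh s = (pi * s - 2 * arcsin s) / (1 - s^2)"

lemma tt_range: assumes "0 < s" "s < 1" shows "0 < tt s" "tt s < 1"
proof -
  have q: "0 < sqrt (1 - s^2)" using assms by (simp add: abs_square_less_1)
  then show "0 < tt s" unfolding tt_def using assms by simp
  have "0 < s*2 + s*(s*2)" using assms by (intro add_pos_pos) auto
  then have "sqrt (1 - s^2) < sqrt ((1+s)^2)" using assms
    by (intro real_sqrt_less_mono) (simp add: power2_eq_square algebra_simps)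
  then have "sqrt (1 - s^2) < 1 + s" using assms by simp
  then show "tt s < 1" unfolding tt_def using assms by simp
qed

lemma tt_range': assumes "0 \<le> s" "s \<le> 1" shows "tt s \<in> {-1..1}"
proof -
  have "sqrt (1 - s^2) \<le> sqrt ((1+s)^2)" using assms
    by (intro real_sqrt_le_mono) (simp add: power2_eq_square algebra_simps)
  then have "sqrt (1 - s^2) \<le> 1 + s" using assms by simp
  moreover have "0 \<le> sqrt (1 - s^2)" using assms by (simp add: power_le_one)
  ultimately have "sqrt (1 - s^2) / (1 + s) \<le> 1" "0 \<le> sqrt (1 - s^2) / (1 + s)"
    using assms by auto
  then show ?thesis unfolding tt_def by auto
qed

lemma arctan_tt: assumes "0 < s" "s < 1" shows "arctan (tt s) = arccos s / 2"
proof -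
  have b: "0 < arccos s" "arccos s < pi" using arccos_lt_bounded[of s] assms by auto
  have "tan (arccos s / 2) = sin (arccos s) / (cos (arccos s) + 1)"
    using tan_half[of "arccos s / 2"] by simp
  also have "\<dots> = tt s" unfolding tt_def using assms by (simp add: sin_arccos add.commute)
  finally have "tan (arccos s / 2) = tt s" .
  then have "arctan (tt s) = arctan (tan (arccos s / 2))" by simp
  also have "\<dots> = arccos s / 2" using b by (intro arctan_tan) auto
  finally show ?thesis .
qed

lemma tt_deriv: assumes "0 < s" "s < 1"
  shows "(tt has_real_derivative (-1 / (sqrt (1 - s^2) * (1 + s)))) (at s)"
proof -
  define q where "q = sqrt (1 - s^2)"
  have q0: "0 < q" using assms unfolding q_def by (simp add: abs_square_less_1)
  have qq: "q * q = 1 - s^2" using assms unfolding q_def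
    by (simp add: abs_square_less_1 less_imp_le)
  have p: "0 < 1 - s^2" using assms by (simp add: abs_square_less_1)
  have "((\<lambda>s. sqrt (1 - s^2) / (1 + s)) has_real_derivative
      ((inverse (sqrt (1 - s^2)) / 2 * (- (2 * s))) * (1 + s) - sqrt (1 - s^2) * 1) / ((1 + s) * (1 + s))) (at s)"
    using p assms
    by (auto intro!: derivative_eq_intros simp: power2_eq_square)
  moreover have "((inverse (sqrt (1 - s^2)) / 2 * (- (2 * s))) * (1 + s) - sqrt (1 - s^2) * 1) / ((1 + s) * (1 + s))
       = -1 / (sqrt (1 - s^2) * (1 + s))"
  proof -
    have "((inverse q / 2 * (- (2 * s))) * (1 + s) - q * 1) / ((1 + s) * (1 + s))
        = (- s * (1 + s) - q * q) / (q * ((1 + s) * (1 + s)))"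
      using q0 assms by (simp add: field_simps)
    also have "\<dots> = (- s * (1 + s) - (1 - s^2)) / (q * ((1 + s) * (1 + s)))" by (simp add: qq)
    also have "\<dots> = -(1 + s) / (q * ((1 + s) * (1 + s)))"
      by (simp add: power2_eq_square algebra_simps)
    also have "\<dots> = -1 / (q * (1 + s))"
    proof -
      have "q \<noteq> 0" "1 + s \<noteq> 0" using q0 assms by auto
      then show ?thesis by (simp add: divide_simps)
    qed
    finally show ?thesis unfolding q_def .
  qed
  ultimately show ?thesis unfolding tt_def[abs_def] by simp
qed

lemma Phi_deriv: assumes "0 < s" "s < 1"
  shows "(Phi has_real_derivative hh s) (at s)"
proof -
  have r: "\<bar>tt s\<bar> < 1" using tt_range[OF assms] by auto
  have d1: "((\<lambda>s. ti2 (tt s)) has_real_derivative ti2d (tt s) * (-1 / (sqrt (1 - s^2) * (1 + s)))) (at s)"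
    by (rule DERIV_chain2[OF ti2_deriv[OF r] tt_deriv[OF assms]])
  have d2: "((\<lambda>s. ln ((1 + s)/2)) has_real_derivative 1 / (1 + s)) (at s)"
    using assms by (auto intro!: derivative_eq_intros simp: field_simps)
  have d: "(Phi has_real_derivative (-4 * (ti2d (tt s) * (-1 / (sqrt (1 - s^2) * (1 + s)))) - pi * (1 / (1 + s)))) (at s)"
    unfolding Phi_def[abs_def] by (intro DERIV_diff DERIV_cmult d1 d2)
  define q where "q = sqrt (1 - s^2)"
  have q0: "0 < q" using assms unfolding q_def by (simp add: abs_square_less_1)
  have qq: "q * q = 1 - s^2" using assms unfolding q_def
    by (simp add: abs_square_less_1 less_imp_le)
  have tpos: "tt s > 0" using tt_range[OF assms] by simp
  have td: "ti2d (tt s) = (arccos s / 2) / tt s"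
    using ti2d_arctan[OF r] arctan_tt[OF assms] tpos by (simp add: field_simps)
  have ac: "arccos s = pi/2 - arcsin s" using assms by (intro arccos_arcsin_eq) auto
  have qne: "q \<noteq> 0" "1 + s \<noteq> 0" using q0 assms by auto
  have "-4 * (ti2d (tt s) * (-1 / (q * (1 + s)))) = 2 * arccos s / (q * q)"
    unfolding td unfolding tt_def q_def[symmetric] using qne by (simp add: divide_simps)
  then have "-4 * (ti2d (tt s) * (-1 / (q * (1 + s)))) - pi * (1 / (1 + s))
      = 2 * arccos s / (1 - s^2) - pi / (1 + s)" by (simp add: qq)
  also have "\<dots> = hh s"
  proof -
    have "s^2 < 1" using assms by (simp add: abs_square_less_1)
    then have ne: "1 - s^2 \<noteq> 0" "1 + s \<noteq> 0" using assms by auto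
    have f: "1 - s^2 = (1 - s) * (1 + s)" by (simp add: power2_eq_square algebra_simps)
    have e: "pi / (1 + s) = pi * (1 - s) / (1 - s^2)"
      unfolding f using assms by simp
    have "2 * arccos s / (1 - s^2) - pi / (1 + s) = (2 * arccos s - pi * (1 - s)) / (1 - s^2)"
      unfolding e by (simp add: diff_divide_distrib)
    also have "2 * arccos s - pi * (1 - s) = pi * s - 2 * arcsin s"
      unfolding ac by (simp add: algebra_simps)
    finally show ?thesis unfolding hh_def .
  qed
  finally show ?thesis using d unfolding q_def by simp
qed

lemma Phi_cont: "continuous_on {0..1} Phi"
proof -
  have ct: "continuous_on {0..1} tt" unfolding tt_def
    by (intro continuous_intros) auto
  have c1: "continuous_on {0..1} (\<lambda>s. ti2 (tt s))"
    by (rule continuous_on_compose2[OF ti2_cont ct]) (use tt_range' in auto)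
  have c2: "continuous_on {0..1} (\<lambda>s::real. ln ((1 + s)/2))"
    by (intro continuous_intros) auto
  show ?thesis unfolding Phi_def[abs_def] by (intro continuous_intros c1 c2)
qed

lemma hh_integral: "(hh has_integral (4 * catalan_const - pi * ln 2)) {0..1}"
proof -
  have "(hh has_integral (Phi 1 - Phi 0)) {0..1}"
    by (rule fundamental_theorem_of_calculus_interior[OF _ Phi_cont])
       (auto simp: has_real_derivative_iff_has_vector_derivative[symmetric] intro!: Phi_deriv)
  moreover have "Phi 1 = 0" unfolding Phi_def tt_def by (simp add: ti2_0)
  moreover have "Phi 0 = -4 * catalan_const + pi * ln 2"
    unfolding Phi_def tt_def by (simp add: ti2_1 ln_div)
  ultimately show ?thesis by simp
qed

definition fn :: "nat \<Rightarrow> real \<Rightarrow> real" where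
  "fn n s = cc n / (2*n+1) * (2 * s * (1 - s^(2*n)) / (1 - s^2))"

lemma fn_poly: fixes s :: real assumes "0 \<le> s" "s < 1"
  shows "2 * s * (1 - s^(2*n)) / (1 - s^2) = (\<Sum>j<n. 2 * s^(2*j+1))"
proof -
  have "s^2 < 1^2" using assms by (intro power_strict_mono) auto
  then have "s^2 \<noteq> 1" by simp
  then have "(\<Sum>j<n. (s^2)^j) = ((s^2)^n - 1) / (s^2 - 1)" by (rule geometric_sum)
  then have g: "(\<Sum>j<n. (s^2)^j) = (1 - s^(2*n)) / (1 - s^2)"
    using minus_divide_divide[of "(s^2)^n - 1" "s^2 - 1"] by (simp add: power_mult)
  have "(\<Sum>j<n. 2 * s^(2*j+1)) = 2 * s * (\<Sum>j<n. (s^2)^j)"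
  proof -
    have t: "2 * s^(2*j+1) = 2 * s * (s^2)^j" for j
    proof -
      have "(s^2)^j = s^(2*j)" by (rule power_mult[symmetric])
      moreover have "s^(2*j+1) = s * s^(2*j)" by simp
      ultimately show ?thesis by simp
    qed
    show ?thesis unfolding t by (simp add: sum_distrib_left)
  qed
  also have "\<dots> = 2 * s * (1 - s^(2*n)) / (1 - s^2)" by (simp add: g)
  finally show ?thesis by simp
qed

lemma poly_integral: "((\<lambda>s. \<Sum>j<n. 2 * s^(2*j+1)) has_integral harm n) {0..1::real}"
proof -
  define Q where "Q s = (\<Sum>j<n. 1 / (j+1) * s^(2*j+2))" for s :: real
  have "((\<lambda>s. \<Sum>j<n. 2 * s^(2*j+1)) has_integral (Q 1 - Q 0)) {0..1}"
  proof (rule fundamental_theorem_of_calculus_interior)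
    show "continuous_on {0..1} Q" unfolding Q_def by (intro continuous_intros) auto
    fix x :: real
    have dj: "((\<lambda>s. 1 / (j+1) * s^(2*j+2)) has_real_derivative 1 / (j+1) * (real (2*j+2) * x^(2*j+1))) (at x)"
      for j :: nat
      using DERIV_cmult[OF DERIV_pow[of "2*j+2" x UNIV], of "1 / (j+1)"] by simp
    have "(Q has_real_derivative (\<Sum>j<n. 1 / (j+1) * (real (2*j+2) * x^(2*j+1)))) (at x)"
      unfolding Q_def[abs_def] by (rule DERIV_sum) (rule dj)
    moreover have "(\<Sum>j<n. 1 / (j+1) * (real (2*j+2) * x^(2*j+1))) = (\<Sum>j<n. 2 * x^(2*j+1))"
      by (intro sum.cong refl) (simp add: field_simps)
    ultimately show "(Q has_vector_derivative (\<Sum>j<n. 2 * x^(2*j+1))) (at x)"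
      by (simp add: has_real_derivative_iff_has_vector_derivative)
  qed simp
  moreover have "Q 1 - Q 0 = harm n"
    unfolding Q_def harm_altdef by (simp add: add.commute inverse_eq_divide)
  ultimately show ?thesis by simp
qed

lemma fn_integral: "(fn n has_integral (cc n / (2*n+1) * harm n)) {0..1}"
proof -
  have "((\<lambda>s::real. 2 * s * (1 - s^(2*n)) / (1 - s^2)) has_integral harm n) {0..1}"
  proof (rule has_integral_spike_finite[where S="{1}", OF _ _ poly_integral[of n]])
    fix s assume "s \<in> {0..1::real} - {1}"
    then show "2 * s * (1 - s^(2*n)) / (1 - s^2) = (\<Sum>j<n. 2 * s^(2*j+1))"
      by (intro fn_poly) auto
  qed simp
  then show ?thesis unfolding fn_def[abs_def] by (rule has_integral_mult_right)
qed

lemma fn_nonneg: assumes "0 \<le> s" "s \<le> 1" shows "0 \<le> fn n s"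
proof (cases "s = 1")
  case True then show ?thesis by (simp add: fn_def)
next
  case False
  then have "s < 1" using assms by simp
  then have "0 \<le> (\<Sum>j<n. 2 * s^(2*j+1))" using assms by (intro sum_nonneg) auto
  then show ?thesis unfolding fn_def using fn_poly[OF assms(1) \<open>s < 1\<close>, of n] cc_nonneg[of n]
    by simp
qed

lemma fn_sums: assumes "0 \<le> s" "s \<le> 1" shows "(\<lambda>n. fn n s) sums hh s"
proof (cases "s = 1")
  case True then show ?thesis by (simp add: fn_def hh_def)
next
  case False
  then have s1: "s < 1" using assms by simp
  then have sa: "\<bar>s\<bar> < 1" using assms by simp
  have ne: "1 - s^2 \<noteq> 0" using sa by (simp add: abs_square_eq_1)
  have a: "(\<lambda>n. (2 * s / (1 - s^2)) * (cc n / (2*n+1))) sums ((2 * s / (1 - s^2)) * (pi/2))"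
    by (rule sums_mult[OF A1_sums])
  have b0: "(\<lambda>n. cc n * s^(2*n+1)/(2*n+1)) sums arcsin s"
    using bs_summable[OF sa] bs_arcsin[OF sa] unfolding bs_def by (metis summable_sums)
  have b: "(\<lambda>n. (2 / (1 - s^2)) * (cc n * s^(2*n+1)/(2*n+1))) sums ((2 / (1 - s^2)) * arcsin s)"
    by (rule sums_mult[OF b0])
  have c: "(\<lambda>n. (2 * s / (1 - s^2)) * (cc n / (2*n+1)) - (2 / (1 - s^2)) * (cc n * s^(2*n+1)/(2*n+1)))
      sums ((2 * s / (1 - s^2)) * (pi/2) - (2 / (1 - s^2)) * arcsin s)"
    by (rule sums_diff[OF a b])
  have q1: "2 * s / uu * (vv / 2) = vv * s / uu" for uu vv :: real by (simp add: divide_simps)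
  have "(2 * s / (1 - s^2)) * (pi/2) - (2 / (1 - s^2)) * arcsin s
      = pi * s / (1 - s^2) - 2 * arcsin s / (1 - s^2)" unfolding q1 by simp
  also have "\<dots> = hh s" unfolding hh_def by (simp add: diff_divide_distrib)
  finally have "(2 * s / (1 - s^2)) * (pi/2) - (2 / (1 - s^2)) * arcsin s = hh s" .
  moreover have "(2 * s / (1 - s^2)) * (cc n / (2*n+1)) - (2 / (1 - s^2)) * (cc n * s^(2*n+1)/(2*n+1))
      = fn n s" for n
  proof -
    have ab: "2 * s / D * K - 2 / D * (K * (s * t)) = K * (2 * s * (1 - t) / D)" for D K t :: real
      by (cases "D = 0") (simp_all add: field_simps)
    have e1: "cc n * s^(2*n+1)/(2*n+1) = (cc n / (2*n+1)) * (s * s^(2*n))" by simp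
    show ?thesis unfolding fn_def e1 by (rule ab)
  qed
  ultimately show ?thesis using c by simp
qed

theorem mainTheorem6:
  shows "(\<lambda>m. let n = Suc m in
            harm n * real ((2 * n) choose n) / ((2 * real n + 1) * 2 ^ (2 * n)))
         sums (4 * catalan_const - pi * ln 2)"
proof -
  define I where "I = 4 * catalan_const - pi * ln 2"
  define g where "g n = cc n / (2*n+1) * harm n" for n
  define P where "P N s = (\<Sum>n<N. fn n s)" for N s
  have intP: "(P N has_integral (\<Sum>n<N. g n)) {0..1}" for N
    unfolding P_def[abs_def] g_def by (intro has_integral_sum fn_integral) auto
  have mono: "P k s \<le> P (Suc k) s" if "s \<in> {0..1}" for k s
    using fn_nonneg[of s k] that unfolding P_def by simp
  have lim: "(\<lambda>k. P k s) \<longlonglongrightarrow> hh s" if "s \<in> {0..1}" for s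
    using fn_sums[of s] that unfolding P_def sums_def by simp
  have Ple: "P k s \<le> hh s" if "s \<in> {0..1}" for k s
  proof -
    have "P k s \<le> (\<Sum>n. fn n s)" unfolding P_def
      using fn_sums[of s] that fn_nonneg[of s] by (intro sum_le_suminf) (auto simp: sums_iff)
    also have "\<dots> = hh s" using fn_sums[of s] that by (simp add: sums_iff)
    finally show ?thesis .
  qed
  have hint: "hh integrable_on {0..1}" "integral {0..1} hh = I"
    using hh_integral unfolding I_def by (auto simp: integrable_on_def integral_unique)
  have gnn: "0 \<le> g n" for n
    unfolding g_def using cc_nonneg[of n] by (simp add: harm_nonneg)
  have bnd: "bounded (range (\<lambda>k. integral {0..1} (P k)))"
    unfolding bounded_iff
  proof (intro exI ballI)
    fix x assume "x \<in> range (\<lambda>k. integral {0..1} (P k))"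
    then obtain k where k: "x = integral {0..1} (P k)" by auto
    have x: "x = (\<Sum>n<k. g n)" using k intP[of k] by (simp add: integral_unique)
    have "x \<le> integral {0..1} hh"
      unfolding k by (rule integral_le[OF has_integral_integrable[OF intP] hint(1) Ple])
    moreover have "0 \<le> x" unfolding x by (intro sum_nonneg gnn)
    ultimately show "norm x \<le> I" using hint(2) by simp
  qed
  have "hh integrable_on {0..1} \<and> (\<lambda>k. integral {0..1} (P k)) \<longlonglongrightarrow> integral {0..1} hh"
    by (rule monotone_convergence_increasing[OF has_integral_integrable[OF intP] mono lim bnd])
  moreover have "integral {0..1} (P k) = (\<Sum>n<k. g n)" for k
    by (rule integral_unique[OF intP])
  ultimately have "(\<lambda>k. \<Sum>n<k. g n) \<longlonglongrightarrow> I"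
    using hint(2) by simp
  then have gs: "g sums I" by (simp add: sums_def)
  have g0: "g 0 = 0" unfolding g_def by (simp add: harm_def)
  have "(\<lambda>m. g (Suc m)) sums I" using gs g0 by (simp add: sums_Suc_iff)
  moreover have "g n = harm n * real ((2 * n) choose n) / ((2 * real n + 1) * 2 ^ (2 * n))" for n
  proof -
    have p4: "(2::real)^(2*n) = 4^n" by (simp add: power_mult)
    show ?thesis unfolding g_def cc_def p4 by (simp add: ac_simps)
  qed
  ultimately show ?thesis unfolding I_def Let_def by simp
qed

end
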